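(* Let $(\mathcal{L},[\cdot,\cdot,\cdot]_{\mathcal{L}})$ be a (right) $3$-Leibniz algebra over a field $\mathbb{K}$ and let $\overline{\mathcal{L}}=\mathbb{K}\oplus\mathcal{L}$ with coalgebra structure $\Delta(a,x)=(a,x)\otimes(1,0)+(1,0)\otimes(0,x)$, $\varepsilon(a,x)=a$. Define the linear map $T:\overline{\mathcal{L}}^{\otimes3}\to\overline{\mathcal{L}}$ by $T((a,x),(b,y),(c,z))=(abc,\,bcx+[x,y,z]_{\mathcal{L}})$. Then $(\overline{\mathcal{L}},T)$ is a trilinear rack.
   Context: A (right) $3$-Leibniz algebra is a vector space $\mathcal{L}$ with a trilinear map $[\cdot,\cdot,\cdot]_{\mathcal{L}}$ such that $[[x_1,x_2,x_3]_{\mathcal{L}},y_1,y_2]_{\mathcal{L}}=[[x_1,y_1,y_2]_{\mathcal{L}},x_2,x_3]_{\mathcal{L}}+[x_1,[x_2,y_1,y_2]_{\mathcal{L}},x_3]_{\mathcal{L}}+[x_1,x_2,[x_3,y_1,y_2]_{\mathcal{L}}]_{\mathcal{L}}$ for all entries. $(\overline{\mathcal{L}},\Delta,\varepsilon)$ is a cocommutative coassociative counital coalgebra; Sweedler notation $\Delta(u)=u_{(1)}\otimes u_{(2)}$, $(\Delta\otimes\mathrm{Id})\Delta(u)=u_{(1)}\otimes u_{(2)}\otimes u_{(3)}$; $\overline{\mathcal{L}}^{\otimes3}$ has the tensor product coalgebra structure. A coalgebra morphism $f$ satisfies $\Delta'\circ f=(f\otimes f)\circ\Delta$, $\varepsilon'\circ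 f=\varepsilon$. A trilinear shelf is a coalgebra $\mathcal{C}$ with a coalgebra morphism $T:\mathcal{C}^{\otimes3}\to\mathcal{C}$ such that $T(T(x,y,z),u,v)=T(T(x,u_{(1)},v_{(1)}),T(y,u_{(2)},v_{(2)}),T(z,u_{(3)},v_{(3)}))$; it is a trilinear rack if there exists a trilinear shelf structure $\widetilde{T}$ on $\mathcal{C}$ with $\widetilde{T}(T(x,y_{(2)},z_{(2)}),z_{(1)},y_{(1)})=\varepsilon(y)\varepsilon(z)x=T(\widetilde{T}(x,y_{(2)},z_{(2)}),z_{(1)},y_{(1)})$ for all $x,y,z$. *)

theory Defs
  imports Main "HOL.Vector_Spaces" "HOL-Library.Product_Plus"
begin

text \<open>Elements of C (x) C, resp. C (x) C (x) C, are represented by finite lists of simple tensors;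
 two such lists denote the same tensor iff every bilinear (trilinear) form takes the same
 value on them (tensors over a field are separated by multilinear forms).\<close>

definition bilin_form :: "('k::field \<Rightarrow> 'c::ab_group_add \<Rightarrow> 'c) \<Rightarrow> ('c \<Rightarrow> 'c \<Rightarrow> 'k) \<Rightarrow> bool" where
  "bilin_form s f \<longleftrightarrow> (\<forall>x. Vector_Spaces.linear s (*) (f x)) \<and> (\<forall>y. Vector_Spaces.linear s (*) (\<lambda>x. f x y))"

definition trilin_form :: "('k::field \<Rightarrow> 'c::ab_group_add \<Rightarrow> 'c) \<Rightarrow> ('c \<Rightarrow> 'c \<Rightarrow> 'c \<Rightarrow> 'k) \<Rightarrow> bool" where
  "trilin_form s f \<longleftrightarrow> (\<forall>y z. Vector_Spaces.linear s (*) (\<lambda>x. f x y z))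
     \<and> (\<forall>x z. Vector_Spaces.linear s (*) (\<lambda>y. f x y z)) \<and> (\<forall>x y. Vector_Spaces.linear s (*) (\<lambda>z. f x y z))"

text \<open>trilinear map C x C x C \<rightarrow> C (= linear map on C (x) C (x) C)\<close>
definition trilin_map :: "('k::field \<Rightarrow> 'c::ab_group_add \<Rightarrow> 'c) \<Rightarrow> ('c \<Rightarrow> 'c \<Rightarrow> 'c \<Rightarrow> 'c) \<Rightarrow> bool" where
  "trilin_map s f \<longleftrightarrow> (\<forall>y z. Vector_Spaces.linear s s (\<lambda>x. f x y z))
     \<and> (\<forall>x z. Vector_Spaces.linear s s (\<lambda>y. f x y z)) \<and> (\<forall>x y. Vector_Spaces.linear s s (\<lambda>z. f x y z))"

definition teq2 :: "('k::field \<Rightarrow> 'c::ab_group_add \<Rightarrow> 'c) \<Rightarrow> ('c \<times> 'c) list \<Rightarrow> ('c \<times> 'c) list \<Rightarrow> bool" where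
  "teq2 s xs ys \<longleftrightarrow> (\<forall>\<beta>. bilin_form s \<beta> \<longrightarrow>
      (\<Sum>(a,b)\<leftarrow>xs. \<beta> a b) = (\<Sum>(a,b)\<leftarrow>ys. \<beta> a b))"

definition teq3 :: "('k::field \<Rightarrow> 'c::ab_group_add \<Rightarrow> 'c) \<Rightarrow> ('c \<times> 'c \<times> 'c) list \<Rightarrow> ('c \<times> 'c \<times> 'c) list \<Rightarrow> bool" where
  "teq3 s xs ys \<longleftrightarrow> (\<forall>\<tau>. trilin_form s \<tau> \<longrightarrow>
      (\<Sum>(a,b,c)\<leftarrow>xs. \<tau> a b c) = (\<Sum>(a,b,c)\<leftarrow>ys. \<tau> a b c))"

text \<open>Sweedler: Delta u = sum over the list D u; (Delta (x) Id) Delta u = sum over sweedler3 D u\<close>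
definition sweedler3 :: "('c \<Rightarrow> ('c \<times> 'c) list) \<Rightarrow> 'c \<Rightarrow> ('c \<times> 'c \<times> 'c) list" where
  "sweedler3 D u = concat (map (\<lambda>(p,c). map (\<lambda>(a,b). (a,b,c)) (D p)) (D u))"

definition sweedler3' :: "('c \<Rightarrow> ('c \<times> 'c) list) \<Rightarrow> 'c \<Rightarrow> ('c \<times> 'c \<times> 'c) list" where
  "sweedler3' D u = concat (map (\<lambda>(a,q). map (\<lambda>(b,c). (a,b,c)) (D q)) (D u))"

definition cocomm_coalgebra :: "('k::field \<Rightarrow> 'c::ab_group_add \<Rightarrow> 'c) \<Rightarrow> ('c \<Rightarrow> ('c \<times> 'c) list) \<Rightarrow> ('c \<Rightarrow> 'k) \<Rightarrow> bool" where
  "cocomm_coalgebra s D eps \<longleftrightarrow>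
     vector_space s \<and>
     Vector_Spaces.linear s (*) eps \<and>
     (\<forall>c u v. teq2 s (D (s c u + v)) (map (\<lambda>(a,b). (s c a, b)) (D u) @ D v)) \<and>
     (\<forall>u. teq3 s (sweedler3 D u) (sweedler3' D u)) \<and>
     (\<forall>u. (\<Sum>(a,b)\<leftarrow>D u. s (eps a) b) = u \<and> (\<Sum>(a,b)\<leftarrow>D u. s (eps b) a) = u) \<and>
     (\<forall>u. teq2 s (D u) (map (\<lambda>(a,b). (b,a)) (D u)))"

text \<open>T : C(x)C(x)C \<rightarrow> C (given by a trilinear map) is a coalgebra morphism for the
  tensor product coalgebra structure on C(x)C(x)C; by linearity it suffices to check on simple tensors\<close>
definition coalg_morph3 :: "('k::field \<Rightarrow> 'c::ab_group_add \<Rightarrow> 'c) \<Rightarrow> ('c \<Rightarrow> ('c \<times> 'c) list) \<Rightarrow> ('c \<Rightarrow> 'k)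
     \<Rightarrow> ('c \<Rightarrow> 'c \<Rightarrow> 'c \<Rightarrow> 'c) \<Rightarrow> bool" where
  "coalg_morph3 s D eps T \<longleftrightarrow>
     (\<forall>x y z. teq2 s (D (T x y z))
        (concat (map (\<lambda>(x1,x2). concat (map (\<lambda>(y1,y2). map (\<lambda>(z1,z2). (T x1 y1 z1, T x2 y2 z2)) (D z)) (D y))) (D x)))
      \<and> eps (T x y z) = eps x * eps y * eps z)"

definition trilinear_shelf :: "('k::field \<Rightarrow> 'c::ab_group_add \<Rightarrow> 'c) \<Rightarrow> ('c \<Rightarrow> ('c \<times> 'c) list) \<Rightarrow> ('c \<Rightarrow> 'k)
     \<Rightarrow> ('c \<Rightarrow> 'c \<Rightarrow> 'c \<Rightarrow> 'c) \<Rightarrow> bool" where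
  "trilinear_shelf s D eps T \<longleftrightarrow>
     cocomm_coalgebra s D eps \<and> trilin_map s T \<and> coalg_morph3 s D eps T \<and>
     (\<forall>x y z u v. T (T x y z) u v =
        (\<Sum>(u1,u2,u3)\<leftarrow>sweedler3 D u. \<Sum>(v1,v2,v3)\<leftarrow>sweedler3 D v.
            T (T x u1 v1) (T y u2 v2) (T z u3 v3)))"

definition trilinear_rack :: "('k::field \<Rightarrow> 'c::ab_group_add \<Rightarrow> 'c) \<Rightarrow> ('c \<Rightarrow> ('c \<times> 'c) list) \<Rightarrow> ('c \<Rightarrow> 'k)
     \<Rightarrow> ('c \<Rightarrow> 'c \<Rightarrow> 'c \<Rightarrow> 'c) \<Rightarrow> bool" where
  "trilinear_rack s D eps T \<longleftrightarrow> trilinear_shelf s D eps T \<and>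
     (\<exists>T'. trilinear_shelf s D eps T' \<and>
        (\<forall>x y z. (\<Sum>(y1,y2)\<leftarrow>D y. \<Sum>(z1,z2)\<leftarrow>D z. T' (T x y2 z2) z1 y1) = s (eps y * eps z) x
               \<and> (\<Sum>(y1,y2)\<leftarrow>D y. \<Sum>(z1,z2)\<leftarrow>D z. T (T' x y2 z2) z1 y1) = s (eps y * eps z) x))"

definition leibniz3 :: "('k::field \<Rightarrow> 'l::ab_group_add \<Rightarrow> 'l) \<Rightarrow> ('l \<Rightarrow> 'l \<Rightarrow> 'l \<Rightarrow> 'l) \<Rightarrow> bool" where
  "leibniz3 sc br \<longleftrightarrow> vector_space sc \<and> trilin_map sc br \<and>
     (\<forall>x1 x2 x3 y1 y2. br (br x1 x2 x3) y1 y2 =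
        br (br x1 y1 y2) x2 x3 + br x1 (br x2 y1 y2) x3 + br x1 x2 (br x3 y1 y2))"

definition bar_scale :: "('k::field \<Rightarrow> 'l \<Rightarrow> 'l) \<Rightarrow> 'k \<Rightarrow> 'k \<times> 'l \<Rightarrow> 'k \<times> 'l" where
  "bar_scale sc c p = (c * fst p, sc c (snd p))"

definition bar_Delta :: "('k::field \<times> 'l::zero) \<Rightarrow> (('k \<times> 'l) \<times> ('k \<times> 'l)) list" where
  "bar_Delta p = [(p, (1, 0)), ((1, 0), (0, snd p))]"

definition bar_eps :: "('k \<times> 'l) \<Rightarrow> 'k" where
  "bar_eps p = fst p"

definition bar_T :: "('k::field \<Rightarrow> 'l::ab_group_add \<Rightarrow> 'l) \<Rightarrow> ('l \<Rightarrow> 'l \<Rightarrow> 'l \<Rightarrow> 'l)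
     \<Rightarrow> 'k \<times> 'l \<Rightarrow> 'k \<times> 'l \<Rightarrow> 'k \<times> 'l \<Rightarrow> 'k \<times> 'l" where
  "bar_T sc br p q r = (fst p * fst q * fst r, sc (fst q * fst r) (snd p) + br (snd p) (snd q) (snd r))"

end

theory Submission
  imports Defs
begin

lemma linD: "Vector_Spaces.linear s1 s2 f \<Longrightarrow> f (x+y) = f x + f y"
  "Vector_Spaces.linear s1 s2 f \<Longrightarrow> f (s1 c x) = s2 c (f x)"
  by (simp_all add: linear_iff)

lemma lin0: "Vector_Spaces.linear s1 s2 f \<Longrightarrow> f 0 = 0"
proof -
  assume a: "Vector_Spaces.linear s1 s2 f"
  have "f 0 = f 0 + f 0" using linD(1)[OF a, of 0 0] by simp
  then show ?thesis by simp
qed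

lemma vs_field: "vector_space ((*) :: 'k::field \<Rightarrow> 'k \<Rightarrow> 'k)"
  by (simp add: vector_space_def algebra_simps)

lemma zero_pair: "((0::'a::zero), (0::'b::zero)) = 0" by (simp add: zero_prod_def)

lemma vs_bar: "vector_space sc \<Longrightarrow> vector_space (bar_scale sc)"
  unfolding vector_space_def bar_scale_def by (auto simp: algebra_simps)

lemma bilinD:
  assumes "bilin_form s f"
  shows "f (x+y) z = f x z + f y z" "f z (x+y) = f z x + f z y"
    "f (s c x) z = c * f x z" "f z (s c x) = c * f z x" "f 0 z = 0" "f z 0 = 0"
  using assms unfolding bilin_form_def
  by (auto dest: linD lin0[where f="f z"] lin0[where f="\<lambda>x. f x z"])

lemma trilinD:
  assumes "trilin_form s f"
  shows "f 0 y z = 0" "f x 0 z = 0" "f x y 0 = 0"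
proof -
  have a: "Vector_Spaces.linear s (*) (\<lambda>x. f x y z)" "Vector_Spaces.linear s (*) (\<lambda>y. f x y z)"
    "Vector_Spaces.linear s (*) (\<lambda>z. f x y z)" for x y z
    using assms unfolding trilin_form_def by blast+
  show "f 0 y z = 0" using lin0[OF a(1)] by simp
  show "f x 0 z = 0" using lin0[OF a(2)] by simp
  show "f x y 0 = 0" using lin0[OF a(3)] by simp
qed

locale L3 =
  fixes sc :: "'k::field \<Rightarrow> 'l::ab_group_add \<Rightarrow> 'l" and br :: "'l \<Rightarrow> 'l \<Rightarrow> 'l \<Rightarrow> 'l"
  assumes L: "leibniz3 sc br"
begin

lemma vs: "vector_space sc" using L by (simp add: leibniz3_def)

interpretation V: vector_space sc by (rule vs)

lemma tri: "trilin_map sc br" using L by (simp add: leibniz3_def)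

lemma br_lin: "Vector_Spaces.linear sc sc (\<lambda>x. br x y z)" "Vector_Spaces.linear sc sc (\<lambda>y. br x y z)"
    "Vector_Spaces.linear sc sc (\<lambda>z. br x y z)"
  using tri unfolding trilin_map_def by blast+

lemma br_simps:
  "br (x+x') y z = br x y z + br x' y z"
  "br x (y+y') z = br x y z + br x y' z"
  "br x y (z+z') = br x y z + br x y z'"
  "br (sc c x) y z = sc c (br x y z)"
  "br x (sc c y) z = sc c (br x y z)"
  "br x y (sc c z) = sc c (br x y z)"
  "br 0 y z = 0" "br x 0 z = 0" "br x y 0 = 0"
  using linD[OF br_lin(1)] linD[OF br_lin(2)] linD[OF br_lin(3)]
    lin0[OF br_lin(1)] lin0[OF br_lin(2)] lin0[OF br_lin(3)] by simp_all

lemma leib: "br (br x1 x2 x3) y1 y2 =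
        br (br x1 y1 y2) x2 x3 + br x1 (br x2 y1 y2) x3 + br x1 x2 (br x3 y1 y2)"
  using L unfolding leibniz3_def by fast

lemmas S = br_simps V.scale_scale V.scale_right_distrib V.scale_left_distrib V.scale_zero_left V.scale_zero_right
  V.scale_one bar_T_def bar_scale_def bar_Delta_def bar_eps_def zero_pair

lemma coalg: "cocomm_coalgebra (bar_scale sc) bar_Delta bar_eps"
  unfolding cocomm_coalgebra_def
proof (intro conjI allI)
  show "vector_space (bar_scale sc)" by (rule vs_bar[OF vs])
  show "Vector_Spaces.linear (bar_scale sc) (*) bar_eps"
    by (simp add: linear_iff vs_bar[OF vs] vs_field bar_eps_def bar_scale_def)
  fix c u v
  show "teq2 (bar_scale sc) (bar_Delta (bar_scale sc c u + v)) (map (\<lambda>(a, b). (bar_scale sc c a, b)) (bar_Delta u) @ bar_Delta v)"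
    unfolding teq2_def
  proof (intro allI impI)
    fix \<beta> assume b: "bilin_form (bar_scale sc) \<beta>"
    have e: "(0::'k, snd (bar_scale sc c u + v)) = bar_scale sc c (0, snd u) + (0, snd v)"
      by (simp add: bar_scale_def)
    have e2: "\<beta> (1,0) (0, snd (bar_scale sc c u + v)) = c * \<beta> (1,0) (0, snd u) + \<beta> (1,0) (0, snd v)"
      unfolding e by (simp only: bilinD[OF b])
    have e3: "\<beta> (bar_scale sc c u + v) (1,0) = c * \<beta> u (1,0) + \<beta> v (1,0)"
      by (simp only: bilinD[OF b])
    have e4: "\<beta> (bar_scale sc c (1,0)) (0, snd u) = c * \<beta> (1,0) (0, snd u)"
      by (simp only: bilinD[OF b])
    show "(\<Sum>(a, b)\<leftarrow>bar_Delta (bar_scale sc c u + v). \<beta> a b) =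
         (\<Sum>(a, b)\<leftarrow>map (\<lambda>(a, b). (bar_scale sc c a, b)) (bar_Delta u) @ bar_Delta v. \<beta> a b)"
      unfolding bar_Delta_def by (simp only: list.map prod.case sum_list.Cons sum_list.Nil append.simps e2 e3 e4 bilinD[OF b]) (simp add: algebra_simps)
  qed
next
  fix u :: "'k \<times> 'l"
  show "teq3 (bar_scale sc) (sweedler3 bar_Delta u) (sweedler3' bar_Delta u)"
    unfolding teq3_def sweedler3_def sweedler3'_def bar_Delta_def
    by (auto simp: zero_pair trilinD)
next
  fix u :: "'k \<times> 'l"
  show "(\<Sum>(a, b)\<leftarrow>bar_Delta u. bar_scale sc (bar_eps a) b) = u"
    "(\<Sum>(a, b)\<leftarrow>bar_Delta u. bar_scale sc (bar_eps b) a) = u"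
    by (cases u; simp add: S)+
next
  fix u :: "'k \<times> 'l"
  show "teq2 (bar_scale sc) (bar_Delta u) (map (\<lambda>(a, b). (b, a)) (bar_Delta u))"
    unfolding teq2_def
  proof (intro allI impI)
    fix \<beta> assume b: "bilin_form (bar_scale sc) \<beta>"
    have e: "u = bar_scale sc (fst u) (1,0) + (0, snd u)"
      by (cases u) (simp add: S)
    have "\<beta> u (1,0) + \<beta> (1,0) (0, snd u) = \<beta> (1,0) u + \<beta> (0, snd u) (1,0)"
      by (subst (1 3) e) (simp add: bilinD[OF b] algebra_simps)
    then show "(\<Sum>(a, b)\<leftarrow>bar_Delta u. \<beta> a b) = (\<Sum>(a, b)\<leftarrow>map (\<lambda>(a, b). (b, a)) (bar_Delta u). \<beta> a b)"
      by (simp add: bar_Delta_def)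
  qed
qed


lemma trimap: "trilin_map (bar_scale sc) (bar_T sc br)"
  unfolding trilin_map_def
  by (simp add: linear_iff vs_bar[OF vs] S algebra_simps)

lemma morph: "coalg_morph3 (bar_scale sc) bar_Delta bar_eps (bar_T sc br)"
  unfolding coalg_morph3_def
proof (intro allI conjI)
  fix x y z :: "'k \<times> 'l"
  show "bar_eps (bar_T sc br x y z) = bar_eps x * bar_eps y * bar_eps z"
    by (simp add: S)
  show "teq2 (bar_scale sc) (bar_Delta (bar_T sc br x y z))
          (concat (map (\<lambda>(x1, x2). concat (map (\<lambda>(y1, y2). map (\<lambda>(z1, z2). (bar_T sc br x1 y1 z1, bar_T sc br x2 y2 z2)) (bar_Delta z)) (bar_Delta y))) (bar_Delta x)))"
    unfolding teq2_def
  proof (intro allI impI)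
    fix \<beta> assume b: "bilin_form (bar_scale sc) \<beta>"
    obtain a X where x: "x = (a,X)" by (cases x)
    obtain bb Y where y: "y = (bb,Y)" by (cases y)
    obtain c Z where z: "z = (c,Z)" by (cases z)
    have e1: "\<beta> (1,0) (0, sc (bb*c) X + br X Y Z) = (bb*c) * \<beta> (1,0) (0, X) + \<beta> (1,0) (0, br X Y Z)"
    proof -
      have "(0::'k, sc (bb*c) X + br X Y Z) = bar_scale sc (bb*c) (0,X) + (0, br X Y Z)"
        by (simp add: S)
      then show ?thesis by (simp only: bilinD[OF b])
    qed
    have e2: "\<beta> (bb*c, 0) w = (bb*c) * \<beta> (1,0) w" for w
    proof -
      have "(bb*c, 0::'l) = bar_scale sc (bb*c) (1,0)" by (simp add: S)
      then show ?thesis by (simp only: bilinD[OF b])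
    qed
    show "(\<Sum>(a, b)\<leftarrow>bar_Delta (bar_T sc br x y z). \<beta> a b) =
         (\<Sum>(a, b)\<leftarrow>concat (map (\<lambda>(x1, x2). concat (map (\<lambda>(y1, y2). map (\<lambda>(z1, z2). (bar_T sc br x1 y1 z1, bar_T sc br x2 y2 z2)) (bar_Delta z)) (bar_Delta y))) (bar_Delta x)). \<beta> a b)"
      unfolding x y z by (simp add: S e1 e2 bilinD[OF b])
  qed
qed

lemma shelf_id: "bar_T sc br (bar_T sc br x y z) u v =
        (\<Sum>(u1,u2,u3)\<leftarrow>sweedler3 bar_Delta u. \<Sum>(v1,v2,v3)\<leftarrow>sweedler3 bar_Delta v.
            bar_T sc br (bar_T sc br x u1 v1) (bar_T sc br y u2 v2) (bar_T sc br z u3 v3))"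
proof -
  obtain a X where x: "x = (a,X)" by (cases x)
  obtain bb Y where y: "y = (bb,Y)" by (cases y)
  obtain c Z where z: "z = (c,Z)" by (cases z)
  obtain d U where u: "u = (d,U)" by (cases u)
  obtain f V where v: "v = (f,V)" by (cases v)
  show ?thesis unfolding x y z u v sweedler3_def
    using leib[of X Y Z U V] by (simp add: S algebra_simps)
qed

lemma shelf: "trilinear_shelf (bar_scale sc) bar_Delta bar_eps (bar_T sc br)"
  unfolding trilinear_shelf_def using coalg trimap morph shelf_id by blast


lemma br_neg: "br (-x) y z = - br x y z" "br x (-y) z = - br x y z" "br x y (-z) = - br x y z"
proof -
  have "br (-x) y z + br x y z = 0" by (simp only: br_simps(1)[symmetric] br_simps(7) left_minus)
  then show "br (-x) y z = - br x y z" by (simp add: eq_neg_iff_add_eq_0)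
  have "br x (-y) z + br x y z = 0" by (simp only: br_simps(2)[symmetric] br_simps(8) left_minus)
  then show "br x (-y) z = - br x y z" by (simp add: eq_neg_iff_add_eq_0)
  have "br x y (-z) + br x y z = 0" by (simp only: br_simps(3)[symmetric] br_simps(9) left_minus)
  then show "br x y (-z) = - br x y z" by (simp add: eq_neg_iff_add_eq_0)
qed

lemma leib_swap: "leibniz3 sc (\<lambda>x y z. - br x z y)"
  unfolding leibniz3_def trilin_map_def
proof (intro conjI allI)
  fix x1 x2 x3 y1 y2
  show "- br (- br x1 x3 x2) y2 y1 = - br (- br x1 y2 y1) x3 x2 + - br x1 x3 (- br x2 y2 y1) + - br x1 (- br x3 y2 y1) x2"
    using leib[of x1 x3 x2 y2 y1] by (simp add: br_neg)
qed (simp_all add: vs linear_iff br_simps br_neg V.scale_minus_right algebra_simps)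

lemma rack: "trilinear_rack (bar_scale sc) bar_Delta bar_eps (bar_T sc br)"
proof -
  interpret R: L3 sc "\<lambda>x y z. - br x z y" by (rule L3.intro[OF leib_swap])
  show ?thesis unfolding trilinear_rack_def
  proof (intro conjI exI[of _ "bar_T sc (\<lambda>x y z. - br x z y)"] allI)
    show "trilinear_shelf (bar_scale sc) bar_Delta bar_eps (bar_T sc br)" by (rule shelf)
    show "trilinear_shelf (bar_scale sc) bar_Delta bar_eps (bar_T sc (\<lambda>x y z. - br x z y))" by (rule R.shelf)
    fix x y z :: "'k \<times> 'l"
    obtain a X where x: "x = (a,X)" by (cases x)
    obtain bb Y where y: "y = (bb,Y)" by (cases y)
    obtain c Z where z: "z = (c,Z)" by (cases z)
    show "(\<Sum>(y1, y2)\<leftarrow>bar_Delta y. \<Sum>(z1, z2)\<leftarrow>bar_Delta z. bar_T sc (\<lambda>x y z. - br x z y) (bar_T sc br x y2 z2) z1 y1) =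
       bar_scale sc (bar_eps y * bar_eps z) x"
      unfolding x y z by (simp add: S br_neg algebra_simps)
    show "(\<Sum>(y1, y2)\<leftarrow>bar_Delta y. \<Sum>(z1, z2)\<leftarrow>bar_Delta z. bar_T sc br (bar_T sc (\<lambda>x y z. - br x z y) x y2 z2) z1 y1) =
       bar_scale sc (bar_eps y * bar_eps z) x"
      unfolding x y z by (simp add: S br_neg algebra_simps)
  qed
qed

end

theorem theorem4p1:
  fixes sc :: "'k::field \<Rightarrow> 'l::ab_group_add \<Rightarrow> 'l"
    and br :: "'l \<Rightarrow> 'l \<Rightarrow> 'l \<Rightarrow> 'l"
  assumes "leibniz3 sc br"
  shows "trilinear_rack (bar_scale sc) bar_Delta bar_eps (bar_T sc br)"
  using L3.rack[OF L3.intro[OF assms]] .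

end
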